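(* In a node-weighted MFQST with Steiner point cost $c>0$, every edge $e$ satisfies $|e|\le\sqrt{2c/f(e)}$, where $f(e)$ is the flow on $e$.
   Context: Let $Z=\{z_1,\dots,z_n\}\subset\mathbb{R}^2$ ($n\ge 1$) be a set of sources and $z_{BS}\in\mathbb{R}^2\setminus Z$ a sink; each source has supply $1$. A flow-dependent quadratic Steiner tree (FQST) consists of a finite set $S\subset\mathbb{R}^2$ of Steiner points and a tree $T$ with vertex set $Z\cup S\cup\{z_{BS}\}$ whose edges are directed towards $z_{BS}$. Every node other than the sink has exactly one out-edge, and the sink has none. Each edge $e$ carries a positive flow $f(e)$ such that: - at each source, the flow on its out-edge minus the total flow on its in-edges equals $1$; - at each Steiner point, the out-flow equals the total in-flow; - the sink receives total flow $n$. The cost is $L(T)=\sum_{e\in E(T)} f(e)|e|^2$. For a fixed $c>0$, a node-weighted MFQST is an FQST minimising $L_c(T)=L(T)+c|S|$ over all FQSTs (any finite $S$, any topology). *)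

theory Defs
  imports "HOL-Analysis.Analysis"
begin

text \<open>Points of the plane are vectors of type real^2.  A flow-dependent quadratic
Steiner tree (FQST) for sources Z and sink zBS is given by a finite set S of
Steiner points, a successor map p (the unique out-edge of a non-sink node v is
the directed edge from v to p v) and a flow map f (f v is the flow on the
out-edge of v).  The edge set is the set of pairs (v, p v) for v a non-sink node.\<close>

definition children :: "(real^2) set \<Rightarrow> real^2 \<Rightarrow> (real^2 \<Rightarrow> real^2) \<Rightarrow> real^2 \<Rightarrow> (real^2) set" where
  "children V zBS p w = {u \<in> V - {zBS}. p u = w}"

definition is_FQST ::
  "(real^2) set \<Rightarrow> real^2 \<Rightarrow> (real^2) set \<Rightarrow> (real^2 \<Rightarrow> real^2) \<Rightarrow> (real^2 \<Rightarrow> real) \<Rightarrow> bool" where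
  "is_FQST Z zBS S p f \<longleftrightarrow>
     (let V = Z \<union> S \<union> {zBS} in
       finite S \<and> S \<inter> (Z \<union> {zBS}) = {} \<and>
       (\<forall>v \<in> V - {zBS}. p v \<in> V) \<and>
       (\<forall>v \<in> V. \<exists>k. (p ^^ k) v = zBS) \<and>
       (\<forall>v \<in> V - {zBS}. f v > 0) \<and>
       (\<forall>z \<in> Z. f z - (\<Sum>u \<in> children V zBS p z. f u) = 1) \<and>
       (\<forall>s \<in> S. f s = (\<Sum>u \<in> children V zBS p s. f u)) \<and>
       (\<Sum>u \<in> children V zBS p zBS. f u) = real (card Z))"

definition FQST_cost ::
  "(real^2) set \<Rightarrow> real^2 \<Rightarrow> (real^2) set \<Rightarrow> (real^2 \<Rightarrow> real^2) \<Rightarrow> (real^2 \<Rightarrow> real) \<Rightarrow> real" where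
  "FQST_cost Z zBS S p f = (\<Sum>v \<in> (Z \<union> S \<union> {zBS}) - {zBS}. f v * (dist v (p v))\<^sup>2)"

definition node_weighted_cost ::
  "real \<Rightarrow> (real^2) set \<Rightarrow> real^2 \<Rightarrow> (real^2) set \<Rightarrow> (real^2 \<Rightarrow> real^2) \<Rightarrow> (real^2 \<Rightarrow> real) \<Rightarrow> real" where
  "node_weighted_cost c Z zBS S p f = FQST_cost Z zBS S p f + c * real (card S)"

definition is_node_weighted_MFQST ::
  "real \<Rightarrow> (real^2) set \<Rightarrow> real^2 \<Rightarrow> (real^2) set \<Rightarrow> (real^2 \<Rightarrow> real^2) \<Rightarrow> (real^2 \<Rightarrow> real) \<Rightarrow> bool" where
  "is_node_weighted_MFQST c Z zBS S p f \<longleftrightarrow>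
     is_FQST Z zBS S p f \<and>
     (\<forall>S' p' f'. is_FQST Z zBS S' p' f' \<longrightarrow>
        node_weighted_cost c Z zBS S p f \<le> node_weighted_cost c Z zBS S' p' f')"

end

theory Submission
  imports Defs
begin

lemma funpow_path:
  assumes pV: "\<forall>u \<in> V - {zBS}. p u \<in> V"
    and sV: "s \<notin> V" and vV: "v \<in> V - {zBS}"
    and p'_def: "p' = p(v := s, s := p v)"
  shows "u \<in> V \<Longrightarrow> (p ^^ k) u = zBS \<Longrightarrow> \<exists>k'. (p' ^^ k') u = zBS"
proof (induction k arbitrary: u)
  case 0 then show ?case by (metis funpow_0)
next
  case (Suc n)
  show ?case
  proof (cases "u = zBS")
    case True then show ?thesis by (metis funpow_0)
  next
    case False
    have puV: "p u \<in> V" using pV Suc.prems False by auto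
    have "(p ^^ n) (p u) = zBS" using Suc.prems(2) by (simp add: funpow_Suc_right del: funpow.simps)
    then obtain k' where k': "(p' ^^ k') (p u) = zBS" using Suc.IH puV by blast
    have us: "u \<noteq> s" using Suc.prems sV by auto
    show ?thesis
    proof (cases "u = v")
      case True
      have "(p' ^^ Suc (Suc k')) u = (p' ^^ k') (p' (p' u))" by (simp add: funpow_Suc_right del: funpow.simps)
      also have "p' (p' u) = p u" using True us p'_def by simp
      finally show ?thesis using k' by blast
    next
      case False
      have "(p' ^^ Suc k') u = (p' ^^ k') (p' u)" by (simp add: funpow_Suc_right del: funpow.simps)
      also have "p' u = p u" using False us p'_def by simp
      finally show ?thesis using k' by blast
    qed
  qed
qed

theorem mainTheorem14:
  fixes Z S :: "(real^2) set" and zBS :: "real^2" and p :: "real^2 \<Rightarrow> real^2"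
    and f :: "real^2 \<Rightarrow> real" and c :: real
  assumes "finite Z" and "Z \<noteq> {}" and "zBS \<notin> Z" and "c > 0"
    and "is_node_weighted_MFQST c Z zBS S p f"
    and "v \<in> (Z \<union> S \<union> {zBS}) - {zBS}"
  shows "dist v (p v) \<le> sqrt (2 * c / f v)"
proof -
  define V where "V = Z \<union> S \<union> {zBS}"
  define w where "w = p v"
  have F: "is_FQST Z zBS S p f" and opt: "\<forall>S' p' f'. is_FQST Z zBS S' p' f' \<longrightarrow> node_weighted_cost c Z zBS S p f \<le> node_weighted_cost c Z zBS S' p' f'"
    using assms(5) unfolding is_node_weighted_MFQST_def by auto
  have finS: "finite S" and disj: "S \<inter> (Z \<union> {zBS}) = {}" and pV: "\<forall>u \<in> V - {zBS}. p u \<in> V"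
    and reach: "\<forall>u \<in> V. \<exists>k. (p ^^ k) u = zBS" and fpos: "\<forall>u \<in> V - {zBS}. f u > 0"
    and fZ: "\<forall>z \<in> Z. f z - (\<Sum>u \<in> children V zBS p z. f u) = 1"
    and fS: "\<forall>x \<in> S. f x = (\<Sum>u \<in> children V zBS p x. f u)"
    and fB: "(\<Sum>u \<in> children V zBS p zBS. f u) = real (card Z)"
    using F unfolding is_FQST_def Let_def V_def by auto
  have finV: "finite V" using finS assms(1) V_def by auto
  have vV: "v \<in> V - {zBS}" using assms(6) V_def by auto
  have wV: "w \<in> V" using pV vV w_def by auto
  have fv: "f v > 0" using fpos vV by auto
  define d where "d = dist v w"
  have key: "f v * d^2 \<le> f v * ((dist v s)^2 + (dist s w)^2) + c" if sV: "s \<notin> V" for s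
  proof -
    define S' where "S' = insert s S"
    define p' where "p' = p(v := s, s := w)"
    define f' where "f' = f(s := f v)"
    have V': "Z \<union> S' \<union> {zBS} = insert s V" using S'_def V_def by auto
    have sv: "s \<noteq> v" using sV vV by auto
    have sB: "s \<noteq> zBS" using sV V_def by auto
    define g where "g = (\<lambda>y. if y = v then s else y)"
    have ch: "children (insert s V) zBS p' x = g ` children V zBS p x" if "x \<noteq> s" for x
    proof
      show "children (insert s V) zBS p' x \<subseteq> g ` children V zBS p x"
      proof
        fix y assume y: "y \<in> children (insert s V) zBS p' x"
        show "y \<in> g ` children V zBS p x"
        proof (cases "y = s")
          case True
          then have "w = x" using y sv unfolding children_def p'_def by auto
          then have "v \<in> children V zBS p x" using vV w_def unfolding children_def by auto
          then show ?thesis using True g_def by force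
        next
          case False
          then have "y \<noteq> v" using y that unfolding children_def p'_def by auto
          then have "y \<in> children V zBS p x" using y False unfolding children_def p'_def by auto
          then show ?thesis using \<open>y \<noteq> v\<close> g_def by force
        qed
      qed
    next
      show "g ` children V zBS p x \<subseteq> children (insert s V) zBS p' x"
        using sv sB sV vV unfolding children_def p'_def g_def w_def by auto
    qed
    have injg: "inj_on g V" using sV unfolding g_def inj_on_def by auto
    have chV: "children V zBS p x \<subseteq> V" for x unfolding children_def by auto
    have sumeq: "(\<Sum>u \<in> children (insert s V) zBS p' x. f' u) = (\<Sum>u \<in> children V zBS p x. f u)"
      if "x \<noteq> s" for x
    proof -
      have "(\<Sum>u \<in> children (insert s V) zBS p' x. f' u) = (\<Sum>u \<in> g ` children V zBS p x. f' u)"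
        using ch[OF that] by simp
      also have "\<dots> = (\<Sum>u \<in> children V zBS p x. f' (g u))"
        by (rule sum.reindex_cong[where l=g]) (auto intro: inj_on_subset[OF injg chV])
      also have "\<dots> = (\<Sum>u \<in> children V zBS p x. f u)"
        by (rule sum.cong) (use chV sV in \<open>auto simp: g_def f'_def\<close>)
      finally show ?thesis .
    qed
    have chs: "children (insert s V) zBS p' s = {v}"
      using sv sB sV vV pV wV unfolding children_def p'_def w_def by auto
    have FQ': "is_FQST Z zBS S' p' f'"
      unfolding is_FQST_def Let_def V'
    proof (intro conjI)
      show "finite S'" using finS S'_def by simp
      show "S' \<inter> (Z \<union> {zBS}) = {}" using disj sV V_def S'_def by auto
      show "\<forall>y\<in>insert s V - {zBS}. p' y \<in> insert s V"
      proof
        fix y assume y: "y \<in> insert s V - {zBS}"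
        show "p' y \<in> insert s V"
        proof (cases "y = s")
          case True then show ?thesis using wV unfolding p'_def by simp
        next
          case False
          then show ?thesis using pV y sv unfolding p'_def by (cases "y = v") auto
        qed
      qed
      show "\<forall>y\<in>insert s V. \<exists>k. (p' ^^ k) y = zBS"
      proof
        fix y assume y: "y \<in> insert s V"
        have p'eq: "p' = p(v := s, s := p v)" using p'_def w_def by simp
        have lem: "\<exists>k'. (p' ^^ k') u = zBS" if uV: "u \<in> V" for u
        proof -
          obtain k where k: "(p ^^ k) u = zBS" using reach uV by blast
          show ?thesis by (rule funpow_path[OF pV sV vV p'eq uV k])
        qed
        show "\<exists>k. (p' ^^ k) y = zBS"
        proof (cases "y = s")
          case True
          obtain k where k: "(p' ^^ k) w = zBS" using lem[OF wV] by blast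
          have ps: "p' s = w" unfolding p'_def by simp
          have "(p' ^^ Suc k) y = (p' ^^ k) (p' y)" by (simp only: funpow_Suc_right o_apply)
          also have "\<dots> = zBS" using True ps k by simp
          finally show ?thesis by blast
        next
          case False
          then have "y \<in> V" using y by simp
          then show ?thesis by (rule lem)
        qed
      qed
      show "\<forall>y\<in>insert s V - {zBS}. 0 < f' y" using fpos fv unfolding f'_def by auto
      show "\<forall>z\<in>Z. f' z - (\<Sum>u\<in>children (insert s V) zBS p' z. f' u) = 1"
        using fZ sumeq sV V_def unfolding f'_def by auto
      show "\<forall>x\<in>S'. f' x = (\<Sum>u\<in>children (insert s V) zBS p' x. f' u)"
        using fS sumeq sV V_def chs sv unfolding S'_def f'_def by auto
      show "(\<Sum>u\<in>children (insert s V) zBS p' zBS. f' u) = real (card Z)"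
        using fB sumeq sB by auto
    qed
    have le: "node_weighted_cost c Z zBS S p f \<le> node_weighted_cost c Z zBS S' p' f'"
      using opt FQ' by blast
    have cardS': "card S' = card S + 1" using finS sV V_def S'_def by auto
    have finV0: "finite (V - {zBS})" using finV by simp
    have c1: "FQST_cost Z zBS S p f = f v * d^2 + (\<Sum>y \<in> V - {zBS} - {v}. f y * (dist y (p y))\<^sup>2)"
      unfolding FQST_cost_def V_def[symmetric] d_def w_def
      using sum.remove[OF finV0 vV] by simp
    have "FQST_cost Z zBS S' p' f' = f v * (dist s w)^2 + (\<Sum>y \<in> V - {zBS}. f' y * (dist y (p' y))\<^sup>2)"
      unfolding FQST_cost_def V'
    proof -
      have "insert s V - {zBS} = insert s (V - {zBS})" using sB by auto
      then show "(\<Sum>y \<in> insert s V - {zBS}. f' y * (dist y (p' y))\<^sup>2) = f v * (dist s w)^2 + (\<Sum>y \<in> V - {zBS}. f' y * (dist y (p' y))\<^sup>2)"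
        using finV0 sV by (simp add: f'_def p'_def)
    qed
    also have "(\<Sum>y \<in> V - {zBS}. f' y * (dist y (p' y))\<^sup>2) = f v * (dist v s)^2 + (\<Sum>y \<in> V - {zBS} - {v}. f' y * (dist y (p' y))\<^sup>2)"
    proof -
      have "f' v * (dist v (p' v))^2 = f v * (dist v s)^2" using sv by (simp add: f'_def p'_def)
      then show ?thesis using sum.remove[OF finV0 vV, of "\<lambda>y. f' y * (dist y (p' y))^2"] by simp
    qed
    also have "(\<Sum>y \<in> V - {zBS} - {v}. f' y * (dist y (p' y))\<^sup>2) = (\<Sum>y \<in> V - {zBS} - {v}. f y * (dist y (p y))\<^sup>2)"
      by (rule sum.cong) (use sV in \<open>auto simp: f'_def p'_def\<close>)
    finally have c2: "FQST_cost Z zBS S' p' f' = f v * (dist s w)^2 + (f v * (dist v s)^2 + (\<Sum>y \<in> V - {zBS} - {v}. f y * (dist y (p y))\<^sup>2))" .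
    show ?thesis using le c1 c2 cardS' unfolding node_weighted_cost_def by (simp add: algebra_simps)
  qed
  define m :: "real^2" where "m = (1/2::real) *\<^sub>R (v + w)"
  define u :: "real^2" where "u = (\<chi> i. 1)"
  have u0: "u \<noteq> 0" unfolding u_def by (metis vec_lambda_beta zero_index zero_neq_one)
  have geo: "(dist v (m + t *\<^sub>R u))^2 + (dist (m + t *\<^sub>R u) w)^2 = d^2/2 + 2 * t^2 * (norm u)^2" for t
  proof -
    have h1: "v - (m + t *\<^sub>R u) = (1/2::real) *\<^sub>R (v - w) - t *\<^sub>R u" unfolding m_def by (simp add: vec_eq_iff field_simps)
    have h2: "(m + t *\<^sub>R u) - w = (1/2::real) *\<^sub>R (v - w) + t *\<^sub>R u" unfolding m_def by (simp add: vec_eq_iff field_simps)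
    have e: "dist v (m + t *\<^sub>R u) = norm ((1/2::real) *\<^sub>R (v - w) - t *\<^sub>R u)"
        "dist (m + t *\<^sub>R u) w = norm ((1/2::real) *\<^sub>R (v - w) + t *\<^sub>R u)"
      by (simp_all only: dist_norm h1 h2)
    have par: "(norm (a - b))^2 + (norm (a + b))^2 = 2 * (norm a)^2 + 2 * (norm b)^2" for a b :: "real^2"
      unfolding power2_norm_eq_inner by (simp add: inner_add inner_diff inner_commute)
    have na: "norm ((1/2::real) *\<^sub>R (v - w)) = d / 2" unfolding d_def dist_norm by simp
    have nb: "norm (t *\<^sub>R u) = \<bar>t\<bar> * norm u" by simp
    show ?thesis unfolding e par na nb by (simp add: power_mult_distrib power2_abs field_simps)
  qed
  show ?thesis
  proof (rule ccontr)
    assume "\<not> ?thesis"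
    then have dgt: "d > sqrt (2 * c / f v)" unfolding d_def w_def by simp
    have x0: "0 \<le> 2 * c / f v" using assms(4) fv by simp
    have "(sqrt (2 * c / f v))^2 < d^2"
      by (rule power_strict_mono[OF dgt real_sqrt_ge_zero[OF x0]]) simp
    then have "d^2 > 2 * c / f v" using real_sqrt_pow2[OF x0] by simp
    then have eps: "f v * d^2 / 2 - c > 0" using fv by (simp add: field_simps)
    define N where "N = (norm u)^2"
    have N0: "N > 0" using u0 N_def by simp
    define \<delta> where "\<delta> = min 1 ((f v * d^2 / 2 - c) / (2 * f v * N))"
    have \<delta>0: "\<delta> > 0" using eps fv N0 \<delta>_def by simp
    have "infinite ((\<lambda>t. m + t *\<^sub>R u) ` {0<..<\<delta>})"
    proof
      assume "finite ((\<lambda>t. m + t *\<^sub>R u) ` {0<..<\<delta>})"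
      moreover have "inj_on (\<lambda>t. m + t *\<^sub>R u) {0<..<\<delta>}"
        using u0 by (auto simp: inj_on_def scaleR_cancel_right)
      ultimately have "finite {0<..<\<delta>}" using finite_imageD by blast
      then show False using infinite_Ioo[OF \<delta>0] by blast
    qed
    then have "\<not> ((\<lambda>t. m + t *\<^sub>R u) ` {0<..<\<delta>} \<subseteq> V)" using finV finite_subset by blast
    then obtain t where t: "t \<in> {0<..<\<delta>}" and tV: "m + t *\<^sub>R u \<notin> V" by blast
    have "t^2 \<le> t" using t \<delta>_def by (simp add: power2_eq_square mult_le_cancel_right1 less_imp_le)
    also have "t < (f v * d^2 / 2 - c) / (2 * f v * N)" using t \<delta>_def by simp
    finally have "t^2 * (2 * f v * N) < f v * d^2 / 2 - c" using fv N0 by (simp add: field_simps)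
    moreover have "f v * d^2 \<le> f v * (d^2/2 + 2 * t^2 * N) + c" using key[OF tV] geo N_def by simp
    ultimately show False by (simp add: algebra_simps)
  qed
qed

end
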